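(* Let $G$ and $H$ be lcsc groups and suppose $G\times H$ acts (set-theoretically) on a set $\Omega$, and there is a subset $Z\subset\Omega$ such that: (i) $G.Z=\Omega=H.Z$; (ii) the sets $\{g\in G: g.Z\cap Z\ne\emptyset\}$ and $\{h\in H: h.Z\cap Z\ne\emptyset\}$ are precompact; (iii) for every compact $K\subset G$ there is a compact $L_K\subset H$ with $K.Z\subset L_K.Z$, and for every compact $L\subset H$ there is a compact $K_L\subset G$ with $L.Z\subset K_L.Z$. Then $G$ and $H$ are coarsely equivalent.
   Context: lcsc = locally compact second countable Hausdorff; $G$ and $H$ act on $\Omega$ through $G\times\{e_H\}$ and $\{e_G\}\times H$, so the two actions commute. Coarse equivalence of lcsc groups: $G$ and $H$ are coarsely equivalent if, after equipping each with a proper (closed balls compact), compatible (inducing the topology), left-invariant metric $d_G$, $d_H$, there is a map $f:G\to H$ with $\sup_{h\in H}d_H(h,f(G))<\infty$ and such that for all sequences $(g_n),(g_n')$ in $G$: $d_G(g_n,g_n')\to\infty$ iff $d_H(f(g_n),f(g_n'))\to\infty$. *)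

theory Defs
  imports "HOL-Analysis.Analysis"
begin

text \<open>Topological groups, written additively (group_add does NOT require commutativity).\<close>
definition topological_group :: "'g::{group_add, topological_space} itself \<Rightarrow> bool" where
  "topological_group _ \<longleftrightarrow>
     continuous_on (UNIV :: ('g \<times> 'g) set) (\<lambda>p. fst p + snd p) \<and>
     continuous_on (UNIV :: 'g set) uminus"

text \<open>lcsc group: locally compact, second countable, Hausdorff topological group.
  Second countability and Hausdorffness are imposed via the type classes.\<close>
definition lcsc_group :: "'g::{group_add, t2_space, second_countable_topology} itself \<Rightarrow> bool" where
  "lcsc_group T \<longleftrightarrow> topological_group T \<and> locally_compact_space (euclidean :: 'g topology)"

definition proper_compatible_left_invariant_metric ::
    "('g::{group_add, topological_space} \<Rightarrow> 'g \<Rightarrow> real) \<Rightarrow> bool" where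
  "proper_compatible_left_invariant_metric d \<longleftrightarrow>
     (\<forall>x y. d x y = 0 \<longleftrightarrow> x = y) \<and>
     (\<forall>x y. d x y = d y x) \<and>
     (\<forall>x y z. d x z \<le> d x y + d y z) \<and>
     (\<forall>x r. compact {y. d x y \<le> r}) \<and>
     (\<forall>S. open S \<longleftrightarrow> (\<forall>x\<in>S. \<exists>e>0. \<forall>y. d x y < e \<longrightarrow> y \<in> S)) \<and>
     (\<forall>g x y. d (g + x) (g + y) = d x y)"

definition coarsely_equivalent ::
    "'g::{group_add, topological_space} itself \<Rightarrow> 'h::{group_add, topological_space} itself \<Rightarrow> bool" where
  "coarsely_equivalent _ _ \<longleftrightarrow>
     (\<exists>(dG :: 'g \<Rightarrow> 'g \<Rightarrow> real) (dH :: 'h \<Rightarrow> 'h \<Rightarrow> real) (f :: 'g \<Rightarrow> 'h).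
        proper_compatible_left_invariant_metric dG \<and>
        proper_compatible_left_invariant_metric dH \<and>
        (\<exists>C. \<forall>h. (INF g. dH h (f g)) \<le> C) \<and>
        (\<forall>gs gs' :: nat \<Rightarrow> 'g.
           filterlim (\<lambda>n. dG (gs n) (gs' n)) at_top sequentially \<longleftrightarrow>
           filterlim (\<lambda>n. dH (f (gs n)) (f (gs' n))) at_top sequentially))"

definition product_action :: "('g::group_add \<times> 'h::group_add \<Rightarrow> 'w \<Rightarrow> 'w) \<Rightarrow> bool" where
  "product_action act \<longleftrightarrow>
     (\<forall>w. act (0, 0) w = w) \<and>
     (\<forall>g g' h h' w. act (g + g', h + h') w = act (g, h) (act (g', h') w))"

end

theory Submission
  imports Defs
begin


section \<open>Topological group basics\<close>

lemma tg_add_cont: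
  assumes "topological_group TYPE('a::{group_add,topological_space})"
  shows "continuous_on (UNIV::('a\<times>'a) set) (\<lambda>p. fst p + snd p)"
  using assms unfolding topological_group_def by blast

lemma tg_uminus_cont:
  assumes "topological_group TYPE('a::{group_add,topological_space})"
  shows "continuous_on (UNIV::'a set) uminus"
  using assms unfolding topological_group_def by blast

lemma tg_cont_add2:
  fixes f g :: "'b::topological_space \<Rightarrow> 'a::{group_add,topological_space}"
  assumes "topological_group TYPE('a)" "continuous_on S f" "continuous_on S g"
  shows "continuous_on S (\<lambda>x. f x + g x)"
proof -
  have "continuous_on S (\<lambda>x. (f x, g x))" using assms by (intro continuous_on_Pair)
  from continuous_on_compose2[OF tg_add_cont[OF assms(1)] this]
  show ?thesis by auto
qed

lemma tg_cont_uminus2: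
  fixes f :: "'b::topological_space \<Rightarrow> 'a::{group_add,topological_space}"
  assumes "topological_group TYPE('a)" "continuous_on S f"
  shows "continuous_on S (\<lambda>x. - f x)"
  using continuous_on_compose2[OF tg_uminus_cont[OF assms(1)] assms(2)] by auto

lemma tg_open_vimage:
  assumes "continuous_on (UNIV::'a::topological_space set) f" "open S"
  shows "open (f -` S)"
  using assms continuous_on_open_vimage[of UNIV f] by auto

lemma tg_open_translate:
  fixes W :: "'a::{group_add,topological_space} set"
  assumes "topological_group TYPE('a)" "open W"
  shows "open ((\<lambda>s. a + s) ` W)"
proof -
  have "(\<lambda>s. a + s) ` W = (\<lambda>y. -a + y) -` W"
  proof (intro set_eqI iffI)
    fix y assume "y \<in> (\<lambda>s. a + s) ` W" then obtain s where "s \<in> W" "y = a + s" by auto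
    then show "y \<in> (\<lambda>y. -a + y) -` W" by (simp add: add.assoc[symmetric])
  next
    fix y assume "y \<in> (\<lambda>y. -a + y) -` W"
    then have "-a + y \<in> W" by simp
    moreover have "y = a + (-a + y)" by (simp add: add.assoc[symmetric])
    ultimately show "y \<in> (\<lambda>s. a + s) ` W" by blast
  qed
  moreover have "continuous_on UNIV (\<lambda>y::'a. -a + y)"
    by (rule tg_cont_add2[OF assms(1)]) (auto intro: continuous_on_const continuous_on_id)
  ultimately show ?thesis using tg_open_vimage assms(2) by metis
qed

lemma tg_open_uminus:
  fixes W :: "'a::{group_add,topological_space} set"
  assumes "topological_group TYPE('a)" "open W"
  shows "open (uminus -` W)"
  using tg_open_vimage[OF tg_uminus_cont[OF assms(1)] assms(2)] .

lemma tg_compact_translate: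
  fixes S :: "'a::{group_add,topological_space} set"
  assumes "topological_group TYPE('a)" "compact S"
  shows "compact ((\<lambda>s. a + s) ` S)"
  apply (rule compact_continuous_image[OF _ assms(2)])
  apply (rule continuous_on_subset[of UNIV])
   apply (rule tg_cont_add2[OF assms(1)]) by (auto intro: continuous_on_const continuous_on_id)

lemma tg_compact_uminus:
  fixes S :: "'a::{group_add,topological_space} set"
  assumes "topological_group TYPE('a)" "compact S"
  shows "compact (uminus ` S)"
  by (rule compact_continuous_image[OF continuous_on_subset[OF tg_uminus_cont[OF assms(1)]] assms(2)]) auto

lemma tg_compact_sum:
  fixes S T :: "'a::{group_add,topological_space} set"
  assumes "topological_group TYPE('a)" "compact S" "compact T"
  shows "compact ((\<lambda>p. fst p + snd p) ` (S \<times> T))"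
  by (rule compact_continuous_image[OF continuous_on_subset[OF tg_add_cont[OF assms(1)]]])
     (auto intro: compact_Times assms)

lemma tg_compact_diff:
  fixes S T :: "'a::{group_add,topological_space} set"
  assumes "topological_group TYPE('a)" "compact S" "compact T"
  shows "compact ((\<lambda>p. fst p + - snd p) ` (S \<times> T))"
proof -
  have "continuous_on UNIV (\<lambda>p::'a\<times>'a. fst p + - snd p)"
    by (intro tg_cont_add2[OF assms(1)] tg_cont_uminus2[OF assms(1)] continuous_on_fst continuous_on_snd continuous_on_id)
  then show ?thesis
    by (rule compact_continuous_image[OF continuous_on_subset]) (auto intro: compact_Times assms)
qed



abbreviation "PCL \<equiv> proper_compatible_left_invariant_metric"

lemma pcl_D:
  assumes "PCL (d::'a::{group_add,topological_space} \<Rightarrow> 'a \<Rightarrow> real)"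
  shows pcl_zero: "\<And>x y. d x y = 0 \<longleftrightarrow> x = y"
    and pcl_sym: "\<And>x y. d x y = d y x"
    and pcl_tri: "\<And>x y z. d x z \<le> d x y + d y z"
    and pcl_cpt: "\<And>x r. compact {y. d x y \<le> r}"
    and pcl_top: "\<And>S. open S \<longleftrightarrow> (\<forall>x\<in>S. \<exists>e>0. \<forall>y. d x y < e \<longrightarrow> y \<in> S)"
    and pcl_inv: "\<And>g x y. d (g + x) (g + y) = d x y"
  using assms unfolding proper_compatible_left_invariant_metric_def
  by auto

lemma pcl_left:
  assumes "PCL (d::'a::{group_add,topological_space} \<Rightarrow> 'a \<Rightarrow> real)"
  shows "d x y = d 0 (-x + y)"
proof -
  have "d (-x + x) (-x + y) = d x y" by (rule pcl_inv[OF assms])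
  then show ?thesis by simp
qed

lemma pcl_nonneg:
  assumes "PCL (d::'a::{group_add,topological_space} \<Rightarrow> 'a \<Rightarrow> real)"
  shows "0 \<le> d x y"
proof -
  have "d x x \<le> d x y + d y x" by (rule pcl_tri[OF assms])
  moreover have "d x x = 0" using pcl_zero[OF assms] by simp
  moreover have "d y x = d x y" by (rule pcl_sym[OF assms])
  ultimately have "d x x \<le> d x y + d y x" "d x x = 0" "d y x = d x y" by blast+
  then show ?thesis by linarith
qed

lemma pcl_open_ball:
  assumes "PCL (d::'a::{group_add,topological_space} \<Rightarrow> 'a \<Rightarrow> real)"
  shows "open {y. d x y < r}"
proof -
  note tri = pcl_tri[OF assms] and top = pcl_top[OF assms]
  show ?thesis unfolding top
  proof
    fix z assume "z \<in> {y. d x y < r}"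
    then have "d x z < r" by simp
    moreover have "\<forall>y. d z y < r - d x z \<longrightarrow> y \<in> {y. d x y < r}"
    proof (intro allI impI)
      fix y assume "d z y < r - d x z"
      moreover have "d x y \<le> d x z + d z y" by (rule tri)
      ultimately show "y \<in> {y. d x y < r}" by simp
    qed
    ultimately show "\<exists>e>0. \<forall>y. d z y < e \<longrightarrow> y \<in> {y. d x y < r}"
      by (intro exI[of _ "r - d x z"]) auto
  qed
qed

lemma pcl_closed_ball:
  assumes "PCL (d::'a::{group_add,topological_space} \<Rightarrow> 'a \<Rightarrow> real)"
  shows "closed {y. d x y \<le> r}"
proof -
  note tri = pcl_tri[OF assms] and sym = pcl_sym[OF assms] and top = pcl_top[OF assms]
  have "open (- {y. d x y \<le> r})" unfolding top
  proof
    fix z assume "z \<in> - {y. d x y \<le> r}"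
    then have "d x z > r" by simp
    moreover have "\<forall>y. d z y < d x z - r \<longrightarrow> y \<in> - {y. d x y \<le> r}"
    proof (intro allI impI)
      fix y assume "d z y < d x z - r"
      moreover have "d x z \<le> d x y + d y z" by (rule tri)
      ultimately show "y \<in> - {y. d x y \<le> r}" using sym[of z y] by auto
    qed
    ultimately show "\<exists>e>0. \<forall>y. d z y < e \<longrightarrow> y \<in> - {y. d x y \<le> r}"
      by (intro exI[of _ "d x z - r"]) auto
  qed
  then show ?thesis by (simp add: closed_def)
qed

lemma pcl_bdd:
  assumes "PCL (d::'a::{group_add,topological_space} \<Rightarrow> 'a \<Rightarrow> real)" "compact S"
  shows "\<exists>B. \<forall>s\<in>S. d a s \<le> B"
proof -
  have "S \<subseteq> (\<Union>n\<in>(UNIV::nat set). {y. d a y < real n})"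
  proof
    fix s assume "s \<in> S"
    obtain n::nat where "d a s < real n" using reals_Archimedean2 by blast
    then show "s \<in> (\<Union>n. {y. d a y < real n})" by blast
  qed
  moreover have "\<And>n. n \<in> UNIV \<Longrightarrow> open {y. d a y < real n}" using pcl_open_ball[OF assms(1)] by blast
  ultimately obtain C where C: "C \<subseteq> UNIV" "finite C" "S \<subseteq> (\<Union>n\<in>C. {y. d a y < real n})"
    using compactE_image[of S UNIV "\<lambda>n. {y. d a y < real n}", OF assms(2)] by metis
  show ?thesis
  proof (intro exI[of _ "real (Max (insert 0 C))"] ballI)
    fix s assume "s \<in> S"
    then obtain n where "n \<in> C" "d a s < real n" using C by blast
    moreover have "n \<le> Max (insert 0 C)" using C(2) \<open>n \<in> C\<close> by (intro Max_ge) auto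
    ultimately show "d a s \<le> real (Max (insert 0 C))" by linarith
  qed
qed

lemma pcl_proper:
  assumes "PCL (d::'a::{group_add,topological_space} \<Rightarrow> 'a \<Rightarrow> real)"
  shows "compact {y. d x y \<le> r}"
  by (rule pcl_cpt[OF assms])



lemma coarse_main:
  fixes act :: "'g::{group_add,topological_space} \<times> 'h::{group_add,topological_space} \<Rightarrow> 'w \<Rightarrow> 'w"
    and Z :: "'w set" and dG :: "'g \<Rightarrow> 'g \<Rightarrow> real" and dH :: "'h \<Rightarrow> 'h \<Rightarrow> real"
  assumes tgG: "topological_group TYPE('g)" and tgH: "topological_group TYPE('h)"
    and dG: "PCL dG" and dH: "PCL dH"
    and pa: "product_action act"
    and covG: "(\<Union>g. (\<lambda>z. act (g, 0) z) ` Z) = UNIV"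
    and covH: "(\<Union>h. (\<lambda>z. act (0, h) z) ` Z) = UNIV"
    and PG: "compact (closure {g. (\<lambda>z. act (g, 0) z) ` Z \<inter> Z \<noteq> {}})"
    and PH: "compact (closure {h. (\<lambda>z. act (0, h) z) ` Z \<inter> Z \<noteq> {}})"
    and iiiG: "\<forall>K. compact K \<longrightarrow> (\<exists>L. compact L \<and>
           (\<Union>k\<in>K. (\<lambda>z. act (k, 0) z) ` Z) \<subseteq> (\<Union>l\<in>L. (\<lambda>z. act (0, l) z) ` Z))"
    and iiiH: "\<forall>L. compact L \<longrightarrow> (\<exists>K. compact K \<and>
           (\<Union>l\<in>L. (\<lambda>z. act (0, l) z) ` Z) \<subseteq> (\<Union>k\<in>K. (\<lambda>z. act (k, 0) z) ` Z))"
  shows "coarsely_equivalent TYPE('g) TYPE('h)"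
proof -
  define PGs where "PGs = {g. (\<lambda>z. act (g, 0) z) ` Z \<inter> Z \<noteq> {}}"
  define PHs where "PHs = {h. (\<lambda>z. act (0, h) z) ` Z \<inter> Z \<noteq> {}}"
  have A0: "\<And>w. act (0, 0) w = w" using pa unfolding product_action_def by blast
  have Ac: "\<And>g g' h h' w. act (g + g', h + h') w = act (g, h) (act (g', h') w)"
    using pa unfolding product_action_def by blast
  have comm: "act (g, 0) (act (0, h) w) = act (0, h) (act (g, 0) w)" for g h w
    using Ac[of g 0 0 h w] Ac[of 0 g h 0 w] by simp
  have Gadd: "act (g, 0) (act (g', 0) w) = act (g + g', 0) w" for g g' w
    using Ac[of g g' 0 0 w] by simp
  have Hadd: "act (0, h) (act (0, h') w) = act (0, h + h') w" for h h' w
    using Ac[of 0 0 h h' w] by simp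
  have Gshift: "x = act (-a + b, 0) y" if "act (a, 0) x = act (b, 0) y" for a b x y
  proof -
    have "x = act (-a, 0) (act (a, 0) x)" using Gadd[of "-a" a x] A0 by simp
    also have "\<dots> = act (-a + b, 0) y" using that Gadd[of "-a" b y] by simp
    finally show ?thesis .
  qed
  have Hshift: "x = act (0, -a + b) y" if "act (0, a) x = act (0, b) y" for a b x y
  proof -
    have "x = act (0, -a) (act (0, a) x)" using Hadd[of "-a" a x] A0 by simp
    also have "\<dots> = act (0, -a + b) y" using that Hadd[of "-a" b y] by simp
    finally show ?thesis .
  qed
  have "undefined \<in> (\<Union>g. (\<lambda>z. act (g, 0) z) ` Z)" using covG by simp
  then obtain z0 where z0: "z0 \<in> Z" by blast
  define F where "F g = (SOME h. \<exists>z\<in>Z. act (-g, 0) z0 = act (0, h) z)" for g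
  have Fspec: "\<exists>z\<in>Z. act (-g, 0) z0 = act (0, F g) z" for g
  proof -
    have "act (-g, 0) z0 \<in> (\<Union>h. (\<lambda>z. act (0, h) z) ` Z)" using covH by simp
    then have "\<exists>h. \<exists>z\<in>Z. act (-g, 0) z0 = act (0, h) z" by blast
    then show ?thesis unfolding F_def by (rule someI_ex)
  qed
  have fwd: "-F g + F g' \<in> (\<lambda>p. fst p + - snd p) ` (L \<times> closure PHs)"
    if kK: "-g + g' \<in> K"
      and incl: "(\<Union>k\<in>uminus ` K. (\<lambda>z. act (k, 0) z) ` Z) \<subseteq> (\<Union>l\<in>L. (\<lambda>z. act (0, l) z) ` Z)"
    for g g' K L
  proof -
    obtain z2 where z2: "z2 \<in> Z" "act (-g, 0) z0 = act (0, F g) z2" using Fspec by blast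
    obtain z4 where z4: "z4 \<in> Z" "act (-g', 0) z0 = act (0, F g') z4" using Fspec by blast
    define k where "k = -g + g'"
    have mg': "-g' = -k + -g" unfolding k_def by (simp add: minus_add add.assoc)
    have "act (-k, 0) z2 \<in> (\<Union>k\<in>uminus ` K. (\<lambda>z. act (k, 0) z) ` Z)"
      using kK z2(1) unfolding k_def by blast
    then obtain l z5 where l: "l \<in> L" "z5 \<in> Z" "act (-k, 0) z2 = act (0, l) z5"
      using incl by blast
    have "act (0, F g') z4 = act (-g', 0) z0" using z4 by simp
    also have "\<dots> = act (-k, 0) (act (-g, 0) z0)" using mg' Gadd by simp
    also have "\<dots> = act (-k, 0) (act (0, F g) z2)" using z2 by simp
    also have "\<dots> = act (0, F g) (act (-k, 0) z2)" by (rule comm)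
    also have "\<dots> = act (0, F g + l) z5" using l(3) Hadd by simp
    finally have "z4 = act (0, - F g' + (F g + l)) z5" by (rule Hshift)
    then have p: "- F g' + (F g + l) \<in> closure PHs"
      using z4(1) l(2) unfolding PHs_def by (intro subsetD[OF closure_subset]) blast
    have "- (- F g' + (F g + l)) = - l + (- F g + F g')" by (simp only: minus_add minus_minus add.assoc)
    then have "-F g + F g' = l + - (- F g' + (F g + l))" by (simp only: add_minus_cancel)
    with p l(1) show ?thesis by (intro image_eqI[of _ _ "(l, - F g' + (F g + l))"]) auto
  qed
  have bwd: "-g + g' \<in> (\<lambda>p. fst p + - snd p) ` (closure PGs \<times> K)"
    if mM: "-F g + F g' \<in> M"
      and incl: "(\<Union>l\<in>M. (\<lambda>z. act (0, l) z) ` Z) \<subseteq> (\<Union>k\<in>K. (\<lambda>z. act (k, 0) z) ` Z)"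
    for g g' K M
  proof -
    obtain z2 where z2: "z2 \<in> Z" "act (-g, 0) z0 = act (0, F g) z2" using Fspec by blast
    obtain z4 where z4: "z4 \<in> Z" "act (-g', 0) z0 = act (0, F g') z4" using Fspec by blast
    define k where "k = -g + g'"
    define m where "m = -F g + F g'"
    have mg': "-g' = -k + -g" unfolding k_def by (simp add: minus_add add.assoc)
    have hg': "F g' = F g + m" unfolding m_def by (simp add: add.assoc[symmetric])
    have "act (0, F g) (act (-k, 0) z2) = act (-k, 0) (act (0, F g) z2)" by (rule comm[symmetric])
    also have "\<dots> = act (-k, 0) (act (-g, 0) z0)" using z2 by simp
    also have "\<dots> = act (-g', 0) z0" using mg' Gadd by simp
    also have "\<dots> = act (0, F g + m) z4" using z4 hg' by simp
    also have "\<dots> = act (0, F g) (act (0, m) z4)" using Hadd by simp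
    finally have "act (0, F g) (act (-k, 0) z2) = act (0, F g) (act (0, m) z4)" .
    then have "act (-k, 0) z2 = act (0, -F g + F g) (act (0, m) z4)" by (rule Hshift)
    then have e1: "act (-k, 0) z2 = act (0, m) z4" using A0 by simp
    have "act (0, m) z4 \<in> (\<Union>l\<in>M. (\<lambda>z. act (0, l) z) ` Z)" using mM z4(1) unfolding m_def by blast
    then obtain j z6 where j: "j \<in> K" "z6 \<in> Z" "act (0, m) z4 = act (j, 0) z6" using incl by blast
    have "z2 = act (- (-k) + j, 0) z6" using e1 j(3) by (intro Gshift) simp
    then have p: "k + j \<in> closure PGs"
      using z2(1) j(2) unfolding PGs_def by (intro subsetD[OF closure_subset]) auto
    have "-g + g' = (k + j) + - j" unfolding k_def by (simp only: add.assoc add.right_inverse add_0_right)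
    with p j(1) show ?thesis by (intro image_eqI[of _ _ "(k + j, j)"]) auto
  qed
  have boundH: "\<exists>S. \<forall>g g'. dG g g' \<le> R \<longrightarrow> dH (F g) (F g') \<le> S" for R
  proof -
    define K where "K = {k. dG 0 k \<le> R}"
    have "compact K" unfolding K_def by (rule pcl_proper[OF dG])
    then have "compact (uminus ` K)" by (rule tg_compact_uminus[OF tgG])
    then obtain L where L: "compact L"
      "(\<Union>k\<in>uminus ` K. (\<lambda>z. act (k, 0) z) ` Z) \<subseteq> (\<Union>l\<in>L. (\<lambda>z. act (0, l) z) ` Z)"
      using iiiG[rule_format, OF \<open>compact (uminus ` K)\<close>] by (elim exE conjE) blast
    have cQ: "compact ((\<lambda>p. fst p + - snd p) ` (L \<times> closure PHs))"
      by (rule tg_compact_diff[OF tgH L(1) PH[folded PHs_def]])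
    obtain B where B: "\<forall>s\<in>(\<lambda>p. fst p + - snd p) ` (L \<times> closure PHs). dH 0 s \<le> B"
      using pcl_bdd[OF dH cQ, of 0] by blast
    show ?thesis
    proof (intro exI allI impI)
      fix g g' assume "dG g g' \<le> R"
      then have "-g + g' \<in> K" unfolding K_def using pcl_left[OF dG, of g g'] by simp
      from fwd[OF this L(2)] have "dH 0 (-F g + F g') \<le> B" by (rule B[rule_format])
      then show "dH (F g) (F g') \<le> B" using pcl_left[OF dH] by simp
    qed
  qed
  have boundG: "\<exists>S. \<forall>g g'. dH (F g) (F g') \<le> R \<longrightarrow> dG g g' \<le> S" for R
  proof -
    define M where "M = {m. dH 0 m \<le> R}"
    have "compact M" unfolding M_def by (rule pcl_proper[OF dH])
    then obtain K where K: "compact K"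
      "(\<Union>l\<in>M. (\<lambda>z. act (0, l) z) ` Z) \<subseteq> (\<Union>k\<in>K. (\<lambda>z. act (k, 0) z) ` Z)"
      using iiiH[rule_format, OF \<open>compact M\<close>] by (elim exE conjE) blast
    have cQ: "compact ((\<lambda>p. fst p + - snd p) ` (closure PGs \<times> K))"
      by (rule tg_compact_diff[OF tgG PG[folded PGs_def] K(1)])
    obtain B where B: "\<forall>s\<in>(\<lambda>p. fst p + - snd p) ` (closure PGs \<times> K). dG 0 s \<le> B"
      using pcl_bdd[OF dG cQ, of 0] by blast
    show ?thesis
    proof (intro exI allI impI)
      fix g g' assume "dH (F g) (F g') \<le> R"
      then have "-F g + F g' \<in> M" unfolding M_def using pcl_left[OF dH, of "F g" "F g'"] by simp
      from bwd[OF this K(2)] have "dG 0 (-g + g') \<le> B" by (rule B[rule_format])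
      then show "dG g g' \<le> B" using pcl_left[OF dG] by simp
    qed
  qed
  obtain B0 where B0: "\<forall>s\<in>closure PHs. dH 0 s \<le> B0"
    using pcl_bdd[OF dH PH[folded PHs_def], of 0] by blast
  have surj: "(INF g. dH h (F g)) \<le> B0" for h
  proof -
    have "act (0, -h) z0 \<in> (\<Union>g. (\<lambda>z. act (g, 0) z) ` Z)" using covG by simp
    then obtain j z7 where z7: "z7 \<in> Z" "act (0, -h) z0 = act (j, 0) z7" by blast
    have "act (-j, 0) z0 = act (-j, 0) (act (0, h) (act (0, -h) z0))"
      using Hadd[of h "-h" z0] A0 by simp
    also have "\<dots> = act (-j, 0) (act (0, h) (act (j, 0) z7))" using z7 by simp
    also have "\<dots> = act (0, h) (act (-j, 0) (act (j, 0) z7))" by (simp add: comm)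
    also have "\<dots> = act (0, h) z7" using Gadd[of "-j" j z7] A0 by simp
    finally have e: "act (-j, 0) z0 = act (0, h) z7" .
    obtain z2 where z2: "z2 \<in> Z" "act (-j, 0) z0 = act (0, F j) z2" using Fspec by blast
    have "z7 = act (0, -h + F j) z2" using e z2(2) by (intro Hshift) simp
    then have "-h + F j \<in> closure PHs"
      using z7(1) z2(1) unfolding PHs_def by (intro subsetD[OF closure_subset]) auto
    then have "dH h (F j) \<le> B0" using B0 pcl_left[OF dH, of h "F j"] by simp
    moreover have "(INF g. dH h (F g)) \<le> dH h (F j)"
      by (rule cINF_lower) (auto intro: bdd_belowI[of _ 0] pcl_nonneg[OF dH])
    ultimately show ?thesis by linarith
  qed
  have seq: "filterlim (\<lambda>n. dG (gs n) (gs' n)) at_top sequentially \<longleftrightarrow>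
           filterlim (\<lambda>n. dH (F (gs n)) (F (gs' n))) at_top sequentially" for gs gs' :: "nat \<Rightarrow> 'g"
  proof
    assume a: "filterlim (\<lambda>n. dG (gs n) (gs' n)) at_top sequentially"
    show "filterlim (\<lambda>n. dH (F (gs n)) (F (gs' n))) at_top sequentially"
      unfolding filterlim_at_top
    proof
      fix R
      obtain S where S: "\<forall>g g'. dH (F g) (F g') \<le> R \<longrightarrow> dG g g' \<le> S" using boundG by blast
      have "eventually (\<lambda>n. S + 1 \<le> dG (gs n) (gs' n)) sequentially"
        using a unfolding filterlim_at_top by blast
      then show "eventually (\<lambda>n. R \<le> dH (F (gs n)) (F (gs' n))) sequentially"
      proof (rule eventually_mono)
        fix n assume "S + 1 \<le> dG (gs n) (gs' n)"
        then show "R \<le> dH (F (gs n)) (F (gs' n))" using S[rule_format, of "gs n" "gs' n"]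
          by (cases "dH (F (gs n)) (F (gs' n)) \<le> R") auto
      qed
    qed
  next
    assume a: "filterlim (\<lambda>n. dH (F (gs n)) (F (gs' n))) at_top sequentially"
    show "filterlim (\<lambda>n. dG (gs n) (gs' n)) at_top sequentially"
      unfolding filterlim_at_top
    proof
      fix R
      obtain S where S: "\<forall>g g'. dG g g' \<le> R \<longrightarrow> dH (F g) (F g') \<le> S" using boundH by blast
      have "eventually (\<lambda>n. S + 1 \<le> dH (F (gs n)) (F (gs' n))) sequentially"
        using a unfolding filterlim_at_top by blast
      then show "eventually (\<lambda>n. R \<le> dG (gs n) (gs' n)) sequentially"
      proof (rule eventually_mono)
        fix n assume "S + 1 \<le> dH (F (gs n)) (F (gs' n))"
        then show "R \<le> dG (gs n) (gs' n)" using S[rule_format, of "gs n" "gs' n"]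
          by (cases "dG (gs n) (gs' n) \<le> R") auto
      qed
    qed
  qed
  show ?thesis unfolding coarsely_equivalent_def
    by (intro exI[of _ dG] exI[of _ dH] exI[of _ F] conjI dG dH exI[of _ B0] allI surj seq)
qed



lemma Hausdorff_euclidean_t2: "Hausdorff_space (euclidean :: 'a::t2_space topology)"
  unfolding Hausdorff_space_def disjnt_def using separation_t2 by auto

lemma lcsc_tg:
  fixes T :: "'a::{group_add,t2_space,second_countable_topology} itself"
  assumes "lcsc_group T"
  shows "topological_group T"
  using assms
  unfolding lcsc_group_def by blast

lemma lcsc_lc:
  fixes T :: "'a::{group_add,t2_space,second_countable_topology} itself"
  assumes "lcsc_group T"
  shows "locally_compact_space (euclidean :: 'a topology)"
  using assms
  unfolding lcsc_group_def by blast

lemma lcsc_compact_nbhd: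
  fixes x :: "'a::{group_add,t2_space,second_countable_topology}"
  assumes "lcsc_group TYPE('a)"
  obtains V K :: "'a set" where "open V" "compact K" "x \<in> V" "V \<subseteq> K"
proof -
  have "\<exists>U K. openin euclidean U \<and> compactin euclidean K \<and> x \<in> U \<and> U \<subseteq> K"
    using lcsc_lc[OF assms] unfolding locally_compact_space_def by simp
  then show ?thesis using that by auto
qed

lemma lcsc_bump:
  fixes U :: "'a::{group_add,t2_space,second_countable_topology} set"
  assumes "lcsc_group TYPE('a)"
    and "open U" "x \<in> U"
  shows "\<exists>f::'a \<Rightarrow> real. continuous_on UNIV f \<and> (\<forall>y. 0 \<le> f y \<and> f y \<le> 1) \<and> f x = 1 \<and> (\<forall>y. y \<notin> U \<longrightarrow> f y = 0)"
proof -
  have cr: "completely_regular_space (euclidean :: 'a topology)"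
    by (rule locally_compact_regular_imp_completely_regular_space[OF lcsc_lc[OF assms(1)]])
       (simp add: Hausdorff_euclidean_t2)
  have "closedin euclidean (- U)" using assms(2) by (simp add: closed_open)
  moreover have "x \<in> topspace euclidean - (- U)" using assms(3) by simp
  ultimately obtain f :: "'a \<Rightarrow> real" where f: "continuous_map euclidean (top_of_set {0..1}) f"
      "f x = 0" "f ` (- U) \<subseteq> {1}"
    using cr unfolding completely_regular_space_def by blast
  have fc: "continuous_on UNIV f" and fr: "\<And>y. f y \<in> {0..1}"
    using f(1) unfolding continuous_map_in_subtopology by auto
  have a: "continuous_on UNIV (\<lambda>y. 1 - f y)" using fc by (intro continuous_on_diff continuous_on_const)
  have b: "\<forall>y. 0 \<le> 1 - f y \<and> 1 - f y \<le> 1" using fr by auto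
  have c: "1 - f x = 1" using f(2) by simp
  have d: "\<forall>y. y \<notin> U \<longrightarrow> 1 - f y = 0" using f(3) by auto
  show ?thesis using a b c d by blast
qed

lemma unif_cont_compact_support:
  fixes f :: "'a::{group_add,topological_space} \<Rightarrow> real"
  assumes tg: "topological_group TYPE('a)" and fc: "continuous_on UNIV f"
    and K: "compact K" and supp: "\<And>x. x \<notin> K \<Longrightarrow> f x = 0" and e: "e > 0"
  shows "\<exists>W. open W \<and> 0 \<in> W \<and> (\<forall>s\<in>W. \<forall>t. \<bar>f (s + t) - f t\<bar> < e)"
proof -
  define \<Phi> where "\<Phi> p = f (fst p + snd p) - f (snd p)" for p :: "'a \<times> 'a"
  have "continuous_on UNIV (\<lambda>p::'a\<times>'a. fst p + snd p)" by (rule tg_add_cont[OF tg])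
  then have c1: "continuous_on UNIV (\<lambda>p::'a\<times>'a. f (fst p + snd p))"
    using continuous_on_compose2[OF fc] by blast
  have c2: "continuous_on UNIV (\<lambda>p::'a\<times>'a. f (snd p))"
    using continuous_on_compose2[OF fc continuous_on_snd[OF continuous_on_id]] by blast
  have cP: "continuous_on UNIV \<Phi>" unfolding \<Phi>_def by (intro continuous_on_diff c1 c2)
  have oO: "open (\<Phi> -` {-e<..<e})"
    using tg_open_vimage[OF cP] by (simp add: open_greaterThanLessThan)
  have "{0} \<times> K \<subseteq> \<Phi> -` {-e<..<e}" using e by (auto simp: \<Phi>_def)
  from Elementary_Topology.tube_lemma[OF K oO this] obtain X0 where X0: "0 \<in> X0" "open X0" "X0 \<times> K \<subseteq> \<Phi> -` {-e<..<e}"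
    by blast
  define W where "W = X0 \<inter> uminus -` X0"
  have "open W" unfolding W_def using X0(2) tg_open_uminus[OF tg X0(2)] by blast
  moreover have "0 \<in> W" unfolding W_def using X0(1) by simp
  moreover have "\<bar>f (s + t) - f t\<bar> < e" if s: "s \<in> W" for s t
  proof (cases "t \<in> K")
    case True
    then have "(s, t) \<in> \<Phi> -` {-e<..<e}" using X0(3) s unfolding W_def by blast
    then show ?thesis by (simp add: \<Phi>_def abs_less_iff)
  next
    case False
    show ?thesis
    proof (cases "s + t \<in> K")
      case True
      then have "(-s, s + t) \<in> \<Phi> -` {-e<..<e}" using X0(3) s unfolding W_def by blast
      then have "\<bar>f t - f (s + t)\<bar> < e" by (simp add: \<Phi>_def abs_less_iff add.assoc[symmetric])
      then show ?thesis by (simp add: abs_minus_commute)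
    next
      case False2: False
      then show ?thesis using False supp e by simp
    qed
  qed
  ultimately show ?thesis by blast
qed



lemma exists_d0:
  fixes T :: "'a::{group_add,t2_space,second_countable_topology} itself"
  assumes lc: "lcsc_group T"
  shows "\<exists>d0::'a \<Rightarrow> 'a \<Rightarrow> real. (\<forall>x y. d0 x y = 0 \<longleftrightarrow> x = y) \<and> (\<forall>x y. d0 x y = d0 y x)
     \<and> (\<forall>x y z. d0 x z \<le> d0 x y + d0 y z)
     \<and> (\<forall>S. open S \<longleftrightarrow> (\<forall>x\<in>S. \<exists>e>0. \<forall>y. d0 x y < e \<longrightarrow> y \<in> S))
     \<and> (\<forall>g x y. d0 (g + x) (g + y) = d0 x y)"
proof -
  have lc': "lcsc_group TYPE('a)" using lc unfolding lcsc_group_def topological_group_def by simp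
  have tg: "topological_group TYPE('a)" using lcsc_tg[OF lc'] .
  obtain V0 K0 :: "'a set" where V0: "open V0" "compact K0" "0 \<in> V0" "V0 \<subseteq> K0"
    using lcsc_compact_nbhd[OF lc'] by blast
  obtain A :: "nat \<Rightarrow> 'a set" where A1: "\<And>i. 0 \<in> A i \<and> open (A i)"
    and A2: "\<And>S. open S \<and> 0 \<in> S \<longrightarrow> (\<exists>i. A i \<subseteq> S)"
    using first_countable_basis[of "0::'a"] by blast
  have "\<forall>i. \<exists>f::'a \<Rightarrow> real. continuous_on UNIV f \<and> (\<forall>y. 0 \<le> f y \<and> f y \<le> 1) \<and> f 0 = 1
          \<and> (\<forall>y. y \<notin> A i \<inter> V0 \<longrightarrow> f y = 0)"
  proof
    fix i
    have "open (A i \<inter> V0)" "0 \<in> A i \<inter> V0" using A1[of i] V0 by auto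
    then show "\<exists>f::'a \<Rightarrow> real. continuous_on UNIV f \<and> (\<forall>y. 0 \<le> f y \<and> f y \<le> 1) \<and> f 0 = 1
          \<and> (\<forall>y. y \<notin> A i \<inter> V0 \<longrightarrow> f y = 0)" by (rule lcsc_bump[OF lc'])
  qed
  then obtain f :: "nat \<Rightarrow> 'a \<Rightarrow> real" where f: "\<And>i. continuous_on UNIV (f i) \<and> (\<forall>y. 0 \<le> f i y \<and> f i y \<le> 1) \<and> f i 0 = 1
          \<and> (\<forall>y. y \<notin> A i \<inter> V0 \<longrightarrow> f i y = 0)"
    by metis
  have fc: "\<And>i. continuous_on UNIV (f i)" and f01: "\<And>i y. 0 \<le> f i y \<and> f i y \<le> 1"
    and f0: "\<And>i. f i 0 = 1" and fA: "\<And>i y. y \<notin> A i \<Longrightarrow> f i y = 0"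
    and fK: "\<And>i y. y \<notin> K0 \<Longrightarrow> f i y = 0"
    using f V0(4) by blast+
  define tm where "tm x y p = (1/2::real)^(fst p) * \<bar>f (fst p) (-x + snd p) - f (fst p) (-y + snd p)\<bar>"
    for x y :: 'a and p :: "nat \<times> 'a"
  define d0 where "d0 x y = (SUP p. tm x y p)" for x y
  have tm0: "0 \<le> tm x y p" for x y p unfolding tm_def by simp
  have tm1: "tm x y p \<le> 1" for x y p
  proof -
    have "\<bar>f (fst p) (-x + snd p) - f (fst p) (-y + snd p)\<bar> \<le> 1"
      using f01[of "fst p" "-x + snd p"] f01[of "fst p" "-y + snd p"] by (simp add: abs_le_iff)
    moreover have "(1/2::real)^(fst p) \<le> 1" by (simp add: power_le_one)
    ultimately show ?thesis unfolding tm_def by (simp add: mult_le_one)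
  qed
  have bdd: "bdd_above (range (tm x y))" for x y using tm1 by (intro bdd_aboveI[of _ 1]) auto
  have up: "tm x y p \<le> d0 x y" for x y p unfolding d0_def by (rule cSUP_upper[OF _ bdd]) simp
  have least: "d0 x y \<le> c" if "\<And>p. tm x y p \<le> c" for x y c
    unfolding d0_def by (rule cSUP_least) (auto intro: that)
  have d0_nonneg: "0 \<le> d0 x y" for x y using up[of x y] tm0[of x y] by (meson order_trans)
  have d0_refl: "d0 x x = 0" for x
  proof -
    have "d0 x x \<le> 0" by (rule least) (simp add: tm_def)
    then show ?thesis using d0_nonneg[of x x] by simp
  qed
  have d0_sym: "d0 x y = d0 y x" for x y
    unfolding d0_def tm_def by (simp add: abs_minus_commute)
  have d0_tri: "d0 x z \<le> d0 x y + d0 y z" for x y z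
  proof (rule least)
    fix p
    have "tm x z p \<le> tm x y p + tm y z p"
    proof -
      have "\<bar>f (fst p) (-x + snd p) - f (fst p) (-z + snd p)\<bar>
           \<le> \<bar>f (fst p) (-x + snd p) - f (fst p) (-y + snd p)\<bar> + \<bar>f (fst p) (-y + snd p) - f (fst p) (-z + snd p)\<bar>"
        by arith
      then show ?thesis unfolding tm_def by (simp add: distrib_left[symmetric] mult_left_mono)
    qed
    also have "\<dots> \<le> d0 x y + d0 y z" by (intro add_mono up)
    finally show "tm x z p \<le> d0 x y + d0 y z" .
  qed
  have tm_shift: "tm (g + x) (g + y) (n, t) = tm x y (n, -g + t)" for g x y n t
    unfolding tm_def by (simp only: fst_conv snd_conv minus_add add.assoc)
  have d0_inv: "d0 (g + x) (g + y) = d0 x y" for g x y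
  proof (rule antisym)
    show "d0 (g + x) (g + y) \<le> d0 x y"
    proof (rule least)
      fix p :: "nat \<times> 'a"
      obtain n t where p: "p = (n, t)" by (cases p)
      show "tm (g + x) (g + y) p \<le> d0 x y" unfolding p tm_shift by (rule up)
    qed
    show "d0 x y \<le> d0 (g + x) (g + y)"
    proof (rule least)
      fix p :: "nat \<times> 'a"
      obtain n t where p: "p = (n, t)" by (cases p)
      have "tm x y p = tm (g + x) (g + y) (n, g + t)" unfolding p tm_shift by (simp add: add.assoc[symmetric])
      then show "tm x y p \<le> d0 (g + x) (g + y)" using up by simp
    qed
  qed
  have d0_left: "d0 x y = d0 0 (-x + y)" for x y
    using d0_inv[of "-x" x y] by simp
  have lower: "(1/2::real)^n \<le> d0 x y" if "-x + y \<notin> A n" for x y n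
  proof -
    have "tm x y (n, y) = (1/2::real)^n" unfolding tm_def using fA[OF that] f0[of n] by simp
    then show ?thesis using up[of x y "(n, y)"] by simp
  qed
  have cont: "\<exists>W. open W \<and> 0 \<in> W \<and> (\<forall>s\<in>W. d0 0 s < e)" if e: "e > 0" for e
  proof -
    obtain N where N: "(1/2::real)^N < e/2" using real_arch_pow_inv[of "e/2" "1/2::real"] e by auto
    have "\<forall>n. \<exists>W. open W \<and> 0 \<in> W \<and> (\<forall>s\<in>W. \<forall>t. \<bar>f n (s + t) - f n t\<bar> < e/2)"
    proof
      fix n
      show "\<exists>W. open W \<and> 0 \<in> W \<and> (\<forall>s\<in>W. \<forall>t. \<bar>f n (s + t) - f n t\<bar> < e/2)"
        by (rule unif_cont_compact_support[OF tg fc V0(2) fK]) (use e in simp_all)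
    qed
    then obtain Wf where Wf: "\<And>n. open (Wf n) \<and> 0 \<in> Wf n \<and> (\<forall>s\<in>Wf n. \<forall>t. \<bar>f n (s + t) - f n t\<bar> < e/2)"
      by metis
    define W where "W = (\<Inter>n\<in>{..<N}. Wf n)"
    have "open W" unfolding W_def using Wf by (intro open_INT) auto
    moreover have "0 \<in> W" unfolding W_def using Wf by auto
    moreover have "d0 0 s < e" if s: "s \<in> W" for s
    proof -
      have "d0 0 s \<le> e/2"
      proof (rule least)
        fix p :: "nat \<times> 'a"
        obtain n t where p: "p = (n, t)" by (cases p)
        show "tm 0 s p \<le> e/2"
        proof (cases "n < N")
          case True
          then have "s \<in> Wf n" using s unfolding W_def by auto
          then have "\<bar>f n (s + (-s + t)) - f n (-s + t)\<bar> < e/2" using Wf by blast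
          then have "\<bar>f n t - f n (-s + t)\<bar> < e/2" by (simp add: add.assoc[symmetric])
          moreover have "(1/2::real)^n \<le> 1" by (simp add: power_le_one)
          ultimately have "(1/2::real)^n * \<bar>f n t - f n (-s + t)\<bar> \<le> 1 * (e/2)"
            by (intro mult_mono) auto
          then show ?thesis unfolding p tm_def by simp
        next
          case False
          have "tm 0 s p \<le> (1/2::real)^n"
          proof -
            have "\<bar>f n t - f n (-s + t)\<bar> \<le> 1"
              using f01[of n t] f01[of n "-s + t"] by (simp add: abs_le_iff)
            then show ?thesis unfolding p tm_def by (simp add: mult_le_cancel_left1)
          qed
          also have "\<dots> \<le> (1/2::real)^N" using False by (intro power_decreasing) auto
          finally show ?thesis using N by simp
        qed
      qed
      then show ?thesis using e by simp
    qed
    ultimately show ?thesis by blast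
  qed
  have top1: "\<exists>e>0. \<forall>y. d0 x y < e \<longrightarrow> y \<in> S" if S: "open S" "x \<in> S" for S x
  proof -
    have "open ((\<lambda>y. x + y) -` S)"
      by (rule tg_open_vimage[OF tg_cont_add2[OF tg continuous_on_const continuous_on_id] S(1)])
    moreover have "0 \<in> (\<lambda>y. x + y) -` S" using S(2) by simp
    ultimately have "\<exists>i. A i \<subseteq> (\<lambda>y. x + y) -` S" using A2[of "(\<lambda>y. x + y) -` S"] by simp
    then obtain n where n: "A n \<subseteq> (\<lambda>y. x + y) -` S" by (elim exE)
    have "y \<in> S" if "d0 x y < (1/2)^n" for y
    proof -
      have "-x + y \<in> A n"
      proof (rule ccontr)
        assume "-x + y \<notin> A n"
        from lower[OF this] that show False by simp
      qed
      then have "x + (-x + y) \<in> S" using n by blast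
      then show ?thesis by (simp add: add.assoc[symmetric])
    qed
    moreover have "(0::real) < (1/2)^n" by simp
    ultimately show ?thesis by blast
  qed
  have top: "open S \<longleftrightarrow> (\<forall>x\<in>S. \<exists>e>0. \<forall>y. d0 x y < e \<longrightarrow> y \<in> S)" for S
  proof
    assume "open S" then show "\<forall>x\<in>S. \<exists>e>0. \<forall>y. d0 x y < e \<longrightarrow> y \<in> S" using top1 by blast
  next
    assume H: "\<forall>x\<in>S. \<exists>e>0. \<forall>y. d0 x y < e \<longrightarrow> y \<in> S"
    show "open S"
    proof (rule open_subopen[THEN iffD2], intro ballI)
      fix x assume "x \<in> S"
      then have "\<exists>e>0. \<forall>y. d0 x y < e \<longrightarrow> y \<in> S" using H by blast
      then obtain e where e: "e > 0" "\<forall>y. d0 x y < e \<longrightarrow> y \<in> S" by (elim exE conjE)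
      obtain W where W: "open W" "0 \<in> W" "\<forall>s\<in>W. d0 0 s < e" using cont[OF e(1)] by (elim exE conjE)
      show "\<exists>T. open T \<and> x \<in> T \<and> T \<subseteq> S"
      proof (intro exI[of _ "(\<lambda>s. x + s) ` W"] conjI)
        show "open ((\<lambda>s. x + s) ` W)" by (rule tg_open_translate[OF tg W(1)])
        show "x \<in> (\<lambda>s. x + s) ` W" using W(2) by (intro image_eqI[of _ _ 0]) auto
        show "(\<lambda>s. x + s) ` W \<subseteq> S"
        proof
          fix y assume "y \<in> (\<lambda>s. x + s) ` W"
          then obtain s where "s \<in> W" "y = x + s" by blast
          then have "-x + y = s" by simp
          then have "d0 x y = d0 0 s" using d0_left[of x y] by simp
          then have "d0 x y < e" using W(3) \<open>s \<in> W\<close> by simp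
          then show "y \<in> S" using e(2) by simp
        qed
      qed
    qed
  qed
  have zero: "d0 x y = 0 \<longleftrightarrow> x = y" for x y
  proof
    assume h: "d0 x y = 0"
    show "x = y"
    proof (rule ccontr)
      assume "x \<noteq> y"
      then obtain U where U: "open U" "x \<in> U" "y \<notin> U" using t1_space by blast
      from top1[OF U(1,2)] obtain e where "e > 0" "\<forall>y. d0 x y < e \<longrightarrow> y \<in> U" by (elim exE conjE)
      then show False using h U(3) by auto
    qed
  next
    assume "x = y" then show "d0 x y = 0" using d0_refl by simp
  qed
  show ?thesis
    by (intro exI[of _ d0] conjI allI zero d0_sym d0_tri top d0_inv)
qed



primrec sums_set :: "'a::monoid_add set \<Rightarrow> nat \<Rightarrow> 'a set" where
  "sums_set T 0 = {0}"
| "sums_set T (Suc m) = (\<lambda>p. fst p + snd p) ` (T \<times> sums_set T m)"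

lemma sums_set_compact:
  fixes T :: "'a::{group_add,topological_space} set"
  assumes "topological_group TYPE('a)" "compact T"
  shows "compact (sums_set T m)"
  by (induction m) (auto intro: tg_compact_sum[OF assms(1) assms(2)])

lemma sums_set_Suc:
  "a \<in> T \<Longrightarrow> y \<in> sums_set T m \<Longrightarrow> a + y \<in> sums_set T (Suc m)"
  by (auto intro!: image_eqI[of _ _ "(a, y)"])

lemma sum_list_rev_uminus:
  "sum_list (rev (map uminus ws)) = - sum_list (ws :: 'a::group_add list)"
  by (induction ws) (simp_all add: minus_add)

lemma sum_list_map_nonneg_mem:
  fixes c :: "'b \<Rightarrow> real"
  assumes "\<And>x. 0 \<le> c x" "a \<in> set ws"
  shows "c a \<le> sum_list (map c ws)"
  using assms(2)
proof (induction ws)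
  case Nil then show ?case by simp
next
  case (Cons b ws)
  have "0 \<le> sum_list (map c ws)" using assms(1) by (induction ws) (auto intro: add_nonneg_nonneg)
  with Cons assms(1)[of b] show ?case by auto
qed

lemma ctop_closed_ball:
  fixes d :: "'a::topological_space \<Rightarrow> 'a \<Rightarrow> real"
  assumes tri: "\<And>x y z. d x z \<le> d x y + d y z" and sym: "\<And>x y. d x y = d y x"
    and top: "\<And>S. open S \<longleftrightarrow> (\<forall>x\<in>S. \<exists>e>0. \<forall>y. d x y < e \<longrightarrow> y \<in> S)"
  shows "closed {y. d x y \<le> r}"
proof -
  have "open (- {y. d x y \<le> r})" unfolding top
  proof
    fix z assume "z \<in> - {y. d x y \<le> r}"
    then have "d x z > r" by simp
    moreover have "\<forall>y. d z y < d x z - r \<longrightarrow> y \<in> - {y. d x y \<le> r}"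
    proof (intro allI impI)
      fix y assume "d z y < d x z - r"
      moreover have "d x z \<le> d x y + d y z" by (rule tri)
      ultimately show "y \<in> - {y. d x y \<le> r}" using sym[of z y] by auto
    qed
    ultimately show "\<exists>e>0. \<forall>y. d z y < e \<longrightarrow> y \<in> - {y. d x y \<le> r}"
      by (intro exI[of _ "d x z - r"]) auto
  qed
  then show ?thesis by (simp add: closed_def)
qed

lemma lcsc_compact_cover:
  fixes T :: "'a::{group_add,t2_space,second_countable_topology} itself"
  assumes lc: "lcsc_group T"
  shows "\<exists>C::nat \<Rightarrow> 'a set. (\<forall>n. compact (C n)) \<and> (\<forall>x. \<exists>n. x \<in> C n)"
proof -
  have lc': "lcsc_group TYPE('a)" using lc unfolding lcsc_group_def topological_group_def by simp
  define \<F> where "\<F> = {U::'a set. open U \<and> (\<exists>K. compact K \<and> U \<subseteq> K)}"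
  have UF: "\<Union>\<F> = UNIV"
  proof (intro set_eqI iffI)
    fix x :: 'a
    obtain V K :: "'a set" where "open V" "compact K" "x \<in> V" "V \<subseteq> K"
      using lcsc_compact_nbhd[OF lc'] by blast
    then show "x \<in> \<Union>\<F>" unfolding \<F>_def by blast
  qed simp
  obtain \<F>' where F': "\<F>' \<subseteq> \<F>" "countable \<F>'" "\<Union>\<F>' = \<Union>\<F>"
    using Lindelof[of \<F>] unfolding \<F>_def by blast
  have ne: "\<F>' \<noteq> {}" using F'(3) UF by auto
  have rng: "range (from_nat_into \<F>') = \<F>'" using ne F'(2) by simp
  have "\<forall>n. \<exists>K. compact K \<and> from_nat_into \<F>' n \<subseteq> K"
  proof
    fix n
    have "from_nat_into \<F>' n \<in> \<F>" using rng F'(1) by blast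
    then show "\<exists>K. compact K \<and> from_nat_into \<F>' n \<subseteq> K" unfolding \<F>_def by blast
  qed
  then obtain C where C: "\<And>n. compact (C n) \<and> from_nat_into \<F>' n \<subseteq> C n" by metis
  have "\<exists>n. x \<in> C n" for x
  proof -
    have "x \<in> \<Union>\<F>'" using F'(3) UF by simp
    then obtain U where "U \<in> \<F>'" "x \<in> U" by blast
    then obtain n where "U = from_nat_into \<F>' n" using rng by (metis rangeE)
    then show ?thesis using C \<open>x \<in> U\<close> by blast
  qed
  then show ?thesis using C by blast
qed



lemma exists_pcl:
  fixes T :: "'a::{group_add,t2_space,second_countable_topology} itself"
  assumes lc: "lcsc_group T"
  shows "\<exists>d::'a \<Rightarrow> 'a \<Rightarrow> real. PCL d"
proof -
  have lc': "lcsc_group TYPE('a)" using lc unfolding lcsc_group_def topological_group_def by simp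
  have tg: "topological_group TYPE('a)" using lcsc_tg[OF lc'] .
  obtain d0 :: "'a \<Rightarrow> 'a \<Rightarrow> real" where D: "(\<forall>x y. d0 x y = 0 \<longleftrightarrow> x = y) \<and> (\<forall>x y. d0 x y = d0 y x)
     \<and> (\<forall>x y z. d0 x z \<le> d0 x y + d0 y z)
     \<and> (\<forall>S. open S \<longleftrightarrow> (\<forall>x\<in>S. \<exists>e>0. \<forall>y. d0 x y < e \<longrightarrow> y \<in> S))
     \<and> (\<forall>g x y. d0 (g + x) (g + y) = d0 x y)"
    using exists_d0[OF lc'] by (rule exE)
  have d0z: "\<And>x y. d0 x y = 0 \<longleftrightarrow> x = y" using D by (elim conjE allE)
  have d0s: "\<And>x y. d0 x y = d0 y x" using D by (elim conjE allE)
  have d0t: "\<And>x y z. d0 x z \<le> d0 x y + d0 y z" using D by (elim conjE allE)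
  have d0top: "\<And>S. open S \<longleftrightarrow> (\<forall>x\<in>S. \<exists>e>0. \<forall>y. d0 x y < e \<longrightarrow> y \<in> S)" using D by (elim conjE allE)
  have d0i: "\<And>g x y. d0 (g + x) (g + y) = d0 x y" using D by (elim conjE allE)
  obtain C :: "nat \<Rightarrow> 'a set" where Cc: "\<And>n. compact (C n)" and Ccov: "\<And>x. \<exists>n. x \<in> C n"
    using lcsc_compact_cover[OF lc'] by blast
  obtain V0 K0 :: "'a set" where V0: "open V0" "compact K0" "0 \<in> V0" "V0 \<subseteq> K0"
    using lcsc_compact_nbhd[OF lc'] by blast
  have "\<forall>x\<in>V0. \<exists>e>0. \<forall>y. d0 x y < e \<longrightarrow> y \<in> V0" using d0top[of V0] V0(1) by (rule iffD1)
  then have "\<exists>e>0. \<forall>y. d0 0 y < e \<longrightarrow> y \<in> V0" using V0(3) by (rule bspec)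
  then obtain e0 where e0: "e0 > 0" "\<And>y. d0 0 y < e0 \<Longrightarrow> y \<in> V0" by blast
  define \<epsilon> where "\<epsilon> = e0 / 4"
  have \<epsilon>: "\<epsilon> > 0" unfolding \<epsilon>_def using e0 by simp
  define N0 where "N0 s = d0 0 s" for s
  have N0_nonneg: "0 \<le> N0 s" for s
  proof -
    have "d0 0 0 \<le> d0 0 s + d0 s 0" by (rule d0t)
    then show ?thesis unfolding N0_def using d0z[of 0 0] d0s[of s 0] by simp
  qed
  have N0_0: "N0 0 = 0" unfolding N0_def using d0z by simp
  have N0_left: "d0 x y = N0 (-x + y)" for x y
    unfolding N0_def using d0i[of "-x" x y] by simp
  have N0_neg: "N0 (-s) = N0 s" for s
  proof -
    have "d0 (s + 0) (s + -s) = d0 0 (-s)" by (rule d0i)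
    then show ?thesis unfolding N0_def using d0s[of s 0] by simp
  qed
  have N0_sub: "N0 (a + b) \<le> N0 a + N0 b" for a b
  proof -
    have "d0 0 (a + b) \<le> d0 0 a + d0 a (a + b)" by (rule d0t)
    moreover have "d0 (a + 0) (a + b) = d0 0 b" by (rule d0i)
    ultimately show ?thesis unfolding N0_def by simp
  qed
  define B2 where "B2 = {y. d0 0 y \<le> 2 * \<epsilon>}"
  have B2sub: "B2 \<subseteq> K0"
  proof
    fix y assume "y \<in> B2"
    then have "d0 0 y < e0" unfolding B2_def \<epsilon>_def using e0 by simp
    then show "y \<in> K0" using e0(2) V0(4) by blast
  qed
  have B2c: "compact B2"
  proof -
    have "closed B2" unfolding B2_def by (rule ctop_closed_ball[OF d0t d0s d0top])
    then have "compact (B2 \<inter> K0)" using V0(2) by (rule closed_Int_compact)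
    moreover have "B2 \<inter> K0 = B2" using B2sub by blast
    ultimately show ?thesis by simp
  qed
  define w where "w s = (LEAST n. s \<in> C n \<union> uminus ` C n)" for s
  have wI: "s \<in> C (w s) \<union> uminus ` C (w s)" for s
  proof -
    obtain n where "s \<in> C n" using Ccov by blast
    then have "s \<in> C n \<union> uminus ` C n" by simp
    then show ?thesis unfolding w_def by (rule LeastI)
  qed
  have w_neg: "w (-s) = w s" for s
  proof -
    have "(-s \<in> C n \<union> uminus ` C n) \<longleftrightarrow> (s \<in> C n \<union> uminus ` C n)" for n
      by (auto simp: image_iff) (metis minus_minus)+
    then show ?thesis unfolding w_def by simp
  qed
  define c where "c s = (if N0 s \<le> \<epsilon> then N0 s else \<epsilon> + real (w s))" for s
  have c_nonneg: "0 \<le> c s" for s unfolding c_def using N0_nonneg \<epsilon> by simp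
  have c_neg: "c (-s) = c s" for s unfolding c_def using N0_neg w_neg by simp
  define cl where "cl ws = sum_list (map c ws)" for ws
  have cl_nonneg: "0 \<le> cl ws" for ws unfolding cl_def
    by (induction ws) (auto intro: add_nonneg_nonneg c_nonneg)
  define N where "N x = (INF ws\<in>{ws. sum_list ws = x}. cl ws)" for x
  have bddN: "bdd_below (cl ` {ws. sum_list ws = x})" for x
    using cl_nonneg by (intro bdd_belowI[of _ 0]) auto
  have N_le: "N x \<le> cl ws" if "sum_list ws = x" for x ws
    unfolding N_def by (rule cINF_lower[OF bddN]) (use that in simp)
  have N_ge: "m \<le> N x" if "\<And>ws. sum_list ws = x \<Longrightarrow> m \<le> cl ws" for m x
  proof -
    have "[x] \<in> {ws. sum_list ws = x}" by simp
    then have "{ws. sum_list ws = x} \<noteq> {}" by blast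
    then show ?thesis unfolding N_def by (rule cINF_greatest) (use that in simp)
  qed
  have N_nonneg: "0 \<le> N x" for x by (rule N_ge) (rule cl_nonneg)
  have N_0: "N 0 = 0" using N_le[of "[]" 0] N_nonneg[of 0] by (simp add: cl_def)
  have N_sub: "N (a + b) \<le> N a + N b" for a b
  proof -
    have "N (a + b) - cl ws2 \<le> N a" if "sum_list ws2 = b" for ws2
    proof -
      have "N (a + b) - cl ws2 \<le> cl ws1" if "sum_list ws1 = a" for ws1
      proof -
        have "N (a + b) \<le> cl (ws1 @ ws2)" by (rule N_le) (simp add: that \<open>sum_list ws2 = b\<close>)
        then show ?thesis by (simp add: cl_def)
      qed
      then show ?thesis by (rule N_ge)
    qed
    then have "N (a + b) - N a \<le> cl ws2" if "sum_list ws2 = b" for ws2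
      using that by force
    then have "N (a + b) - N a \<le> N b" by (rule N_ge)
    then show ?thesis by simp
  qed
  have N_neg_le: "N (-x) \<le> N x" for x
  proof (rule N_ge)
    fix ws assume "sum_list ws = x"
    then have "sum_list (rev (map uminus ws)) = -x" by (simp add: sum_list_rev_uminus)
    then have "N (-x) \<le> cl (rev (map uminus ws))" by (rule N_le)
    also have "cl (rev (map uminus ws)) = cl ws"
      unfolding cl_def by (simp add: rev_map[symmetric] sum_list_rev o_def c_neg)
    finally show "N (-x) \<le> cl ws" .
  qed
  have N_neg: "N (-x) = N x" for x using N_neg_le[of x] N_neg_le[of "-x"] by simp
  have word_lower: "min \<epsilon> (N0 (sum_list ws)) \<le> cl ws" for ws
  proof (induction ws)
    case Nil then show ?case using N0_0 \<epsilon> by (simp add: cl_def)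
  next
    case (Cons a ws)
    have cl_cons: "cl (a # ws) = c a + cl ws" by (simp add: cl_def)
    show ?case
    proof (cases "N0 a \<le> \<epsilon>")
      case False
      then have "\<epsilon> \<le> c a" unfolding c_def by simp
      then show ?thesis using cl_cons cl_nonneg[of ws] by simp
    next
      case True
      then have ca: "c a = N0 a" unfolding c_def by simp
      show ?thesis
      proof (cases "\<epsilon> \<le> cl ws")
        case True
        then show ?thesis using cl_cons c_nonneg[of a] by simp
      next
        case False
        then have "N0 (sum_list ws) \<le> cl ws" using Cons.IH by simp
        then have "N0 (a + sum_list ws) \<le> c a + cl ws" using N0_sub[of a "sum_list ws"] ca by simp
        then show ?thesis using cl_cons by simp
      qed
    qed
  qed
  have N_lower: "min \<epsilon> (N0 x) \<le> N x" for x
    by (rule N_ge) (use word_lower in blast)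
  have N_upper: "N x \<le> N0 x" if "N0 x \<le> \<epsilon>" for x
  proof -
    have "N x \<le> cl [x]" by (rule N_le) simp
    then show ?thesis using that by (simp add: cl_def c_def)
  qed
  define d where "d x y = N (-x + y)" for x y
  have d_zero: "d x y = 0 \<longleftrightarrow> x = y" for x y
  proof
    assume h: "d x y = 0"
    have "min \<epsilon> (N0 (-x + y)) \<le> 0" using N_lower[of "-x + y"] h unfolding d_def by simp
    then have "N0 (-x + y) = 0" using \<epsilon> N0_nonneg[of "-x + y"] by (simp add: min_le_iff_disj)
    then have "0 = -x + y" unfolding N0_def using d0z by simp
    then show "x = y" by (metis add_minus_cancel add_0_right)
  next
    assume "x = y" then show "d x y = 0" unfolding d_def using N_0 by simp
  qed
  have d_sym: "d x y = d y x" for x y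
  proof -
    have "-(-x + y) = -y + x" by (simp add: minus_add)
    then show ?thesis unfolding d_def using N_neg[of "-x + y"] by simp
  qed
  have d_tri: "d x z \<le> d x y + d y z" for x y z
  proof -
    have "-x + z = (-x + y) + (-y + z)" by (simp add: add.assoc)
    then show ?thesis unfolding d_def using N_sub[of "-x + y" "-y + z"] by simp
  qed
  have d_inv: "d (g + x) (g + y) = d x y" for g x y
  proof -
    have "-(g + x) + (g + y) = -x + y" by (simp only: minus_add add.assoc minus_add_cancel)
    then show ?thesis unfolding d_def by simp
  qed
  have d_d0: "d x y < e \<longleftrightarrow> d0 x y < e" if "e \<le> \<epsilon>" for x y e
  proof
    assume "d x y < e"
    then have "min \<epsilon> (N0 (-x + y)) < e" using N_lower[of "-x + y"] unfolding d_def by simp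
    then show "d0 x y < e" using that N0_left[of x y] by (auto simp: min_def split: if_splits)
  next
    assume "d0 x y < e"
    then have "N0 (-x + y) < e" using N0_left[of x y] by simp
    then have "N (-x + y) \<le> N0 (-x + y)" using that by (intro N_upper) simp
    then show "d x y < e" unfolding d_def using \<open>N0 (-x + y) < e\<close> by simp
  qed
  have d_top: "open S \<longleftrightarrow> (\<forall>x\<in>S. \<exists>e>0. \<forall>y. d x y < e \<longrightarrow> y \<in> S)" for S
  proof
    assume "open S"
    show "\<forall>x\<in>S. \<exists>e>0. \<forall>y. d x y < e \<longrightarrow> y \<in> S"
    proof
      fix x assume "x \<in> S"
      moreover have "\<forall>x\<in>S. \<exists>e>0. \<forall>y. d0 x y < e \<longrightarrow> y \<in> S" using d0top[of S] \<open>open S\<close> by (rule iffD1)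
      ultimately have "\<exists>e>0. \<forall>y. d0 x y < e \<longrightarrow> y \<in> S" by blast
      then obtain e where e: "e > 0" "\<forall>y. d0 x y < e \<longrightarrow> y \<in> S" by blast
      have "\<forall>y. d x y < min e \<epsilon> \<longrightarrow> y \<in> S"
      proof (intro allI impI)
        fix y assume "d x y < min e \<epsilon>"
        then have "d0 x y < min e \<epsilon>" using d_d0[of "min e \<epsilon>" x y] by simp
        then show "y \<in> S" using e(2) by simp
      qed
      then show "\<exists>e>0. \<forall>y. d x y < e \<longrightarrow> y \<in> S" using e(1) \<epsilon> by (intro exI[of _ "min e \<epsilon>"]) simp
    qed
  next
    assume H: "\<forall>x\<in>S. \<exists>e>0. \<forall>y. d x y < e \<longrightarrow> y \<in> S"
    have "\<forall>x\<in>S. \<exists>e>0. \<forall>y. d0 x y < e \<longrightarrow> y \<in> S"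
    proof
      fix x assume "x \<in> S"
      then obtain e where e: "e > 0" "\<forall>y. d x y < e \<longrightarrow> y \<in> S" using H by blast
      have "\<forall>y. d0 x y < min e \<epsilon> \<longrightarrow> y \<in> S"
      proof (intro allI impI)
        fix y assume "d0 x y < min e \<epsilon>"
        then have "d x y < min e \<epsilon>" using d_d0[of "min e \<epsilon>" x y] by simp
        then show "y \<in> S" using e(2) by simp
      qed
      then show "\<exists>e>0. \<forall>y. d0 x y < e \<longrightarrow> y \<in> S" using e(1) \<epsilon> by (intro exI[of _ "min e \<epsilon>"]) simp
    qed
    then show "open S" using d0top[of S] by (rule iffD2[rotated])
  qed
  have N_ball_compact: "\<exists>Q. compact Q \<and> {s. N s \<le> r} \<subseteq> Q" for r
  proof -
    define R where "R = r + 1"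
    define Tr where "Tr = B2 \<union> (\<Union>n\<in>{..nat \<lceil>R\<rceil>}. C n \<union> uminus ` C n)"
    have Trc: "compact Tr" unfolding Tr_def
      using B2c Cc tg_compact_uminus[OF tg] by (intro compact_Un compact_UN) auto
    have B2T: "b \<in> Tr" if "N0 b \<le> 2 * \<epsilon>" for b
      using that unfolding Tr_def B2_def N0_def by simp
    have bigT: "a \<in> Tr" if "c a \<le> R" "\<not> N0 a \<le> \<epsilon>" for a
    proof -
      have "\<epsilon> + real (w a) \<le> R" using that unfolding c_def by simp
      then have "real (w a) \<le> R" using \<epsilon> by simp
      then have "w a \<le> nat \<lceil>R\<rceil>" by linarith
      then show ?thesis using wI[of a] unfolding Tr_def by blast
    qed
    have inv: "(\<forall>a\<in>set ws. c a \<le> R) \<longrightarrow> (\<exists>b y m \<rho>. sum_list ws = b + y \<and> y \<in> sums_set Tr m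
        \<and> N0 b \<le> \<rho> \<and> 0 \<le> \<rho> \<and> \<rho> \<le> \<epsilon> \<and> real m * \<epsilon> + \<rho> \<le> 2 * cl ws)" for ws
    proof (induction ws)
      case Nil
      show ?case by (intro impI exI[of _ 0] conjI) (simp_all add: N0_0 cl_def \<epsilon> less_imp_le)
    next
      case (Cons a ws)
      show ?case
      proof
        assume lets: "\<forall>a'\<in>set (a # ws). c a' \<le> R"
        then obtain b y m \<rho> where IH: "sum_list ws = b + y" "y \<in> sums_set Tr m" "N0 b \<le> \<rho>" "0 \<le> \<rho>"
          "\<rho> \<le> \<epsilon>" "real m * \<epsilon> + \<rho> \<le> 2 * cl ws" using Cons.IH by auto
        have cl_cons: "cl (a # ws) = c a + cl ws" by (simp add: cl_def)
        have sum_eq: "sum_list (a # ws) = (a + b) + y" using IH(1) by (simp add: add.assoc)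
        show "\<exists>b y m \<rho>. sum_list (a # ws) = b + y \<and> y \<in> sums_set Tr m
          \<and> N0 b \<le> \<rho> \<and> 0 \<le> \<rho> \<and> \<rho> \<le> \<epsilon> \<and> real m * \<epsilon> + \<rho> \<le> 2 * cl (a # ws)"
        proof (cases "N0 a \<le> \<epsilon>")
          case False
          have aT: "a \<in> Tr" using bigT[OF _ False] lets by simp
          have bT: "b \<in> Tr" using B2T IH(3,5) \<epsilon> by simp
          have "a + (b + y) \<in> sums_set Tr (Suc (Suc m))"
            by (intro sums_set_Suc aT bT IH(2))
          moreover have "\<epsilon> \<le> c a" using False unfolding c_def by simp
          ultimately show ?thesis using IH sum_eq cl_cons
            by (intro exI[of _ 0] exI[of _ "a + (b + y)"] exI[of _ "Suc (Suc m)"] exI[of _ 0])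
               (simp_all add: N0_0 add.assoc algebra_simps)
        next
          case True
          have ca: "c a = N0 a" using True unfolding c_def by simp
          have Nab: "N0 (a + b) \<le> N0 a + \<rho>" using N0_sub[of a b] IH(3) by simp
          show ?thesis
          proof (cases "N0 a + \<rho> \<le> \<epsilon>")
            case True
            show ?thesis using IH sum_eq cl_cons ca Nab True N0_nonneg[of a]
              by (intro exI[of _ "a + b"] exI[of _ y] exI[of _ m] exI[of _ "N0 a + \<rho>"]) simp
          next
            case False
            have abT: "a + b \<in> Tr" using B2T Nab IH(5) \<open>N0 a \<le> \<epsilon>\<close> by simp
            have "(a + b) + y \<in> sums_set Tr (Suc m)" by (intro sums_set_Suc abT IH(2))
            then show ?thesis using IH sum_eq cl_cons ca False N0_nonneg[of a]
              by (intro exI[of _ 0] exI[of _ "(a + b) + y"] exI[of _ "Suc m"] exI[of _ 0])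
                 (simp_all add: N0_0 algebra_simps)
          qed
        qed
      qed
    qed
    define M where "M = nat \<lceil>2 * R / \<epsilon>\<rceil> + 1"
    define Q where "Q = (\<Union>m\<in>{..M}. sums_set Tr m)"
    have Qc: "compact Q" unfolding Q_def using sums_set_compact[OF tg Trc] by blast
    have "{s. N s \<le> r} \<subseteq> Q"
    proof
      fix s assume "s \<in> {s. N s \<le> r}"
      then have "N s < R" unfolding R_def by simp
      have "[s] \<in> {ws. sum_list ws = s}" by simp
      then have ne: "{ws. sum_list ws = s} \<noteq> {}" by blast
      then obtain ws where ws: "sum_list ws = s" "cl ws < R"
        using \<open>N s < R\<close> unfolding N_def using cINF_less_iff[OF ne bddN, of R] by auto
      have "\<forall>a\<in>set ws. c a \<le> R"
      proof
        fix a assume "a \<in> set ws"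
        then have "c a \<le> cl ws" unfolding cl_def by (rule sum_list_map_nonneg_mem[OF c_nonneg])
        then show "c a \<le> R" using ws(2) by simp
      qed
      then obtain b y m \<rho> where I: "sum_list ws = b + y" "y \<in> sums_set Tr m" "N0 b \<le> \<rho>" "0 \<le> \<rho>"
          "\<rho> \<le> \<epsilon>" "real m * \<epsilon> + \<rho> \<le> 2 * cl ws" using inv[of ws] by blast
      have "b \<in> Tr" using B2T I(3,5) \<epsilon> by simp
      then have sm: "s \<in> sums_set Tr (Suc m)" using sums_set_Suc[OF _ I(2)] I(1) ws(1) by simp
      have "real m * \<epsilon> < 2 * R" using I(4,6) ws(2) by simp
      then have "real m < 2 * R / \<epsilon>" using \<epsilon> by (simp add: field_simps)
      then have "Suc m \<le> M" unfolding M_def by linarith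
      then show "s \<in> Q" unfolding Q_def using sm by blast
    qed
    then show ?thesis using Qc by blast
  qed
  have d_proper: "compact {y. d x y \<le> r}" for x r
  proof -
    obtain Q where Q: "compact Q" "{s. N s \<le> r} \<subseteq> Q" using N_ball_compact by blast
    have cl: "closed {y. d x y \<le> r}" by (rule ctop_closed_ball[OF d_tri d_sym d_top])
    have "{y. d x y \<le> r} \<subseteq> (\<lambda>s. x + s) ` Q"
    proof
      fix y assume "y \<in> {y. d x y \<le> r}"
      then have "-x + y \<in> Q" using Q(2) unfolding d_def by auto
      moreover have "y = x + (-x + y)" by (simp add: add.assoc[symmetric])
      ultimately show "y \<in> (\<lambda>s. x + s) ` Q" by blast
    qed
    moreover have "compact ((\<lambda>s. x + s) ` Q)" by (rule tg_compact_translate[OF tg Q(1)])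
    ultimately have "compact ({y. d x y \<le> r} \<inter> (\<lambda>s. x + s) ` Q)"
      using cl by (intro closed_Int_compact) auto
    moreover have "{y. d x y \<le> r} \<inter> (\<lambda>s. x + s) ` Q = {y. d x y \<le> r}"
      using \<open>{y. d x y \<le> r} \<subseteq> _\<close> by blast
    ultimately show ?thesis by simp
  qed
  have "PCL d" unfolding proper_compatible_left_invariant_metric_def
    by (intro conjI allI d_zero d_sym d_tri d_proper d_top d_inv)
  then show ?thesis by blast
qed


theorem mainTheorem17:
  fixes act :: "'g::{group_add, t2_space, second_countable_topology} \<times>
                'h::{group_add, t2_space, second_countable_topology} \<Rightarrow> 'w \<Rightarrow> 'w"
    and Z :: "'w set"
  assumes "lcsc_group TYPE('g)" and "lcsc_group TYPE('h)"
    and "product_action act"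
    and "(\<Union>g. (\<lambda>z. act (g, 0) z) ` Z) = UNIV"
    and "(\<Union>h. (\<lambda>z. act (0, h) z) ` Z) = UNIV"
    and "compact (closure {g. (\<lambda>z. act (g, 0) z) ` Z \<inter> Z \<noteq> {}})"
    and "compact (closure {h. (\<lambda>z. act (0, h) z) ` Z \<inter> Z \<noteq> {}})"
    and "\<forall>K. compact K \<longrightarrow> (\<exists>L. compact L \<and>
           (\<Union>k\<in>K. (\<lambda>z. act (k, 0) z) ` Z) \<subseteq> (\<Union>l\<in>L. (\<lambda>z. act (0, l) z) ` Z))"
    and "\<forall>L. compact L \<longrightarrow> (\<exists>K. compact K \<and>
           (\<Union>l\<in>L. (\<lambda>z. act (0, l) z) ` Z) \<subseteq> (\<Union>k\<in>K. (\<lambda>z. act (k, 0) z) ` Z))"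
  shows "coarsely_equivalent TYPE('g) TYPE('h)"
proof -
  obtain dG :: "'g \<Rightarrow> 'g \<Rightarrow> real" where dG: "PCL dG" using exists_pcl[OF assms(1)] by (rule exE)
  obtain dH :: "'h \<Rightarrow> 'h \<Rightarrow> real" where dH: "PCL dH" using exists_pcl[OF assms(2)] by (rule exE)
  show ?thesis
    by (rule coarse_main[OF lcsc_tg[OF assms(1)] lcsc_tg[OF assms(2)] dG dH assms(3-9)])
qed

end
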